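(* Let $k\ge 1$, $n=2^{k+1}$, and run Jakobsson's pebble-update procedure (with its $k+1$ pebbles) for $n/2=2^k$ steps. Then for every initial label $j$ with $1\le j<k$, the pebble with initial label $j$ makes exactly $2^{k-j-1}$ backward moves during these $2^k$ steps.
   Context: Jakobsson's pebble-update procedure (hash-chain preimage traversal). Fix $K\ge 1$ and $N=2^K$ (in the claim, $N=n$ and $K=k+1$). There are $K$ pebbles, identified by their initial label $j\in\{1,\dots,K\}$. Pebble $j$ has two fixed constants $S_j=3\cdot 2^j$ (start increment) and $D_j=2^{j+1}$ (destination increment), and two integer fields $\mathrm{Position}$ and $\mathrm{Destination}$ (which may be set to $+\infty$). Initially $\mathrm{Position}=\mathrm{Destination}=2^j$ for pebble $j$, and a counter $c$ equals $0$. The pebbles are kept sorted by $\mathrm{Position}$, and "the first pebble" means the pebble with the smallest $\mathrm{Position}$. One step: (i) if $c=N$, stop; otherwise $c\leftarrow c+1$; (ii) for every pebble with $\mathrm{Position}\ne\mathrm{Destination}$, set $\mathrm{Position}\leftarrow\mathrm{Position}-2$; (iii) if $c$ is even, the first pebble (say with initial label $j$) makes a backward move: $\mathrm{Position}\leftarrow \mathrm{Position}+S_j$, $\mathrm{Destination}\leftarrow\mathrm{Destination}+D_j$; if the new Destination exceeds $N$, both fields are set to $+\infty$ and the pebble is said to be discarded; then the pebbles are re-sorted by $\mathrm{Position}$. (Each pebble also stores a hash-chain value, which does not influence the evolution of the Position and Destination fields.) *)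

theory Defs
  imports Main "HOL-Library.Product_Lexorder"
begin

text \<open>Extended integers: None represents +infinity.\<close>
type_synonym eint = "int option"

text \<open>A pebble: (initial label j, Position, Destination).\<close>
type_synonym pebble = "nat \<times> eint \<times> eint"

text \<open>State: (counter c, pebbles in sorted order, number of backward moves per label).\<close>
type_synonym pstate = "nat \<times> pebble list \<times> (nat \<Rightarrow> nat)"

definition pos_key :: "pebble \<Rightarrow> bool \<times> int" where
  "pos_key p = (case fst (snd p) of None \<Rightarrow> (True, 0) | Some x \<Rightarrow> (False, x))"

definition advance :: "pebble \<Rightarrow> pebble" where
  "advance p = (case p of (j, pos, dest) \<Rightarrow>
     if pos \<noteq> dest then (j, map_option (\<lambda>x. x - 2) pos, dest) else p)"

definition backmove :: "nat \<Rightarrow> pebble \<Rightarrow> pebble" where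
  "backmove N p = (case p of (j, pos, dest) \<Rightarrow>
     (let pos' = map_option (\<lambda>x. x + 3 * 2 ^ j) pos;
          dest' = map_option (\<lambda>x. x + 2 ^ (j + 1)) dest
      in if (case dest' of None \<Rightarrow> True | Some d \<Rightarrow> d > int N)
         then (j, None, None) else (j, pos', dest')))"

definition pstep :: "nat \<Rightarrow> pstate \<Rightarrow> pstate" where
  "pstep N s = (case s of (c, ps, mv) \<Rightarrow>
     if c = N then s else
     (let c' = c + 1; ps1 = map advance ps in
      if even c' then
        (case ps1 of [] \<Rightarrow> (c', ps1, mv)
         | p # rest \<Rightarrow> (c', sort_key pos_key (backmove N p # rest),
                         mv(fst p := mv (fst p) + 1)))
      else (c', ps1, mv)))"

definition pinit :: "nat \<Rightarrow> pstate" where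
  "pinit K = (0, [(j, Some (2 ^ j), Some (2 ^ j)). j \<leftarrow> [1..<K + 1]], (\<lambda>_. 0))"

definition backward_moves :: "nat \<Rightarrow> nat \<Rightarrow> nat \<Rightarrow> nat" where
  "backward_moves K t j = snd (snd ((pstep (2 ^ K) ^^ t) (pinit K))) j"

end

theory Submission imports Defs begin

definition mm :: "nat \<Rightarrow> nat \<Rightarrow> nat" where "mm c j = (c + 2^j) div 2^(j+1)"
definition DD :: "nat \<Rightarrow> nat \<Rightarrow> nat" where "DD c j = 2^j * (2 * mm c j + 1)"
definition PP :: "nat \<Rightarrow> nat \<Rightarrow> int" where
  "PP c j = int (DD c j) + max 0 (2^j - 2 * (int c + 2^(j+1) - int (DD c j)))"
definition peb :: "nat \<Rightarrow> nat \<Rightarrow> pebble" where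
  "peb c j = (j, Some (PP c j), Some (int (DD c j)))"

lemma val_unique: "(2::nat)^i * (2*a+1) = 2^j * (2*b+1) \<Longrightarrow> i = j"
proof (induction i arbitrary: j)
  case 0
  then show ?case by (cases j) (auto, presburger)
next
  case (Suc i)
  then show ?case by (cases j) (auto, presburger)
qed

lemma val_exists: "n > 0 \<Longrightarrow> \<exists>i b. n = (2::nat)^i * (2*b+1)"
proof (induction n rule: less_induct)
  case (less n)
  show ?case
  proof (cases "even n")
    case True
    then obtain n' where n': "n = 2*n'" by blast
    with less.prems have "n' < n" "n' > 0" by auto
    with less.IH obtain i b where "n' = 2^i*(2*b+1)" by blast
    with n' have "n = 2^(Suc i)*(2*b+1)" by simp
    then show ?thesis by blast
  next
    case False
    then obtain b where "n = 2*b+1" using oddE by blast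
    then show ?thesis by (intro exI[of _ 0] exI[of _ b]) simp
  qed
qed

lemma mm_bounds: "2^(j+1) * mm c j \<le> c + 2^j" "c + 2^j < 2^(j+1) * (mm c j + 1)"
  unfolding mm_def
  using div_times_less_eq_dividend[of "c+2^j" "2^(j+1)"]
  apply (simp add: mult.commute)
  using dividend_less_times_div[of "2^(j+1)" "c+2^j"] by (simp add: mult.commute)

lemma DD_eq: "DD c j = 2^(j+1) * mm c j + 2^j"
  unfolding DD_def by (simp add: algebra_simps)

lemma DD_gt: "DD c j > c"
proof -
  have "c + 2^j < 2^(j+1) * (mm c j + 1)" by (rule mm_bounds(2))
  then have "c + 2^j < 2^(j+1) * mm c j + 2 * 2^j" by (simp add: algebra_simps)
  then show ?thesis unfolding DD_eq by linarith
qed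

lemma DD_even: "j \<ge> 1 \<Longrightarrow> even (DD c j)"
  unfolding DD_def by (cases j) auto

lemma mm_step: "mm (c+1) j = (if DD c j = c + 1 then mm c j + 1 else mm c j)"
proof -
  have b1: "2^(j+1) * mm c j \<le> c + 2^j" and b2: "c + 2^j < 2^(j+1) * (mm c j + 1)"
    using mm_bounds by auto
  show ?thesis
  proof (cases "DD c j = c + 1")
    case True
    then have e: "c + 1 + 2^j = 2^(j+1) * (mm c j + 1)" unfolding DD_eq by (simp add: algebra_simps)
    have "mm (c+1) j = (c + 1 + 2^j) div 2^(j+1)" unfolding mm_def by simp
    also have "\<dots> = mm c j + 1" unfolding e by simp
    finally show ?thesis using True by simp
  next
    case False
    then have "c + 1 + 2^j < 2^(j+1) * (mm c j + 1)"
      using b2 unfolding DD_eq by (simp add: algebra_simps)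
    then have "(c + 1 + 2^j) div 2^(j+1) = mm c j"
      using b1 by (intro div_nat_eqI) (auto simp: mult.commute)
    then show ?thesis using False unfolding mm_def by simp
  qed
qed

lemma DD_step_same: "DD c j \<noteq> c + 1 \<Longrightarrow> DD (c+1) j = DD c j"
proof -
  assume d: "DD c j \<noteq> c + 1"
  then have "mm (c+1) j = mm c j" using mm_step[of c j] by simp
  then show ?thesis by (simp add: DD_def)
qed

lemma DD_step_move: "DD c j = c + 1 \<Longrightarrow> DD (c+1) j = DD c j + 2^(j+1)"
proof -
  assume d: "DD c j = c + 1"
  then have "mm (c+1) j = mm c j + 1" using mm_step[of c j] by simp
  then show ?thesis by (simp add: DD_def algebra_simps)
qed

lemma PP_eqD: "j \<ge> 1 \<Longrightarrow> DD c j \<le> c + 2 \<Longrightarrow> PP c j = int (DD c j)"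
proof -
  assume j: "j \<ge> 1" and d: "DD c j \<le> c + 2"
  have "(2::int)^j \<ge> 2" using j by (metis power_one_right power_increasing one_le_numeral)
  moreover have "(2::int)^(j+1) = 2 * 2^j" by simp
  moreover have "int (DD c j) \<le> int c + 2" using d by linarith
  ultimately have "(2::int)^j - 2 * (int c + 2^(j+1) - int (DD c j)) < 0"
    by (smt (verit))
  then show ?thesis unfolding PP_def by simp
qed

lemma PP_ge: "PP c j \<ge> int (DD c j)" unfolding PP_def by simp

lemma advance_same: "j \<ge> 1 \<Longrightarrow> DD c j \<noteq> c + 1 \<Longrightarrow> advance (peb c j) = peb (c+1) j"
proof -
  assume j: "j \<ge> 1" and d: "DD c j \<noteq> c + 1"
  have dd: "DD (c+1) j = DD c j" using DD_step_same[OF d] .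
  define e where "e = (2::int)^j - 2 * (int c + 2^(j+1) - int (DD c j))"
  have ev: "even e" unfolding e_def using j by (cases j) auto
  have p0: "PP c j = int (DD c j) + max 0 e" unfolding PP_def e_def by simp
  have p1: "PP (c+1) j = int (DD c j) + max 0 (e - 2)" unfolding PP_def e_def dd by (simp add: algebra_simps)
  show ?thesis
  proof (cases "e > 0")
    case True
    with ev have "e \<ge> 2" by presburger
    then show ?thesis unfolding advance_def peb_def using p0 p1 dd by auto
  next
    case False
    then show ?thesis unfolding advance_def peb_def using p0 p1 dd by auto
  qed
qed

lemma backmove_move: "j \<ge> 1 \<Longrightarrow> DD c j = c + 1 \<Longrightarrow> c + 1 + 2^(j+1) \<le> N \<Longrightarrow>
   backmove N (advance (peb c j)) = peb (c+1) j"
proof -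
  assume j: "j \<ge> 1" and d: "DD c j = c + 1" and n: "c + 1 + 2^(j+1) \<le> N"
  have p: "PP c j = int (DD c j)" using PP_eqD[OF j] d by simp
  have a: "advance (peb c j) = peb c j" unfolding advance_def peb_def p by simp
  have dd: "DD (c+1) j = c + 1 + 2^(j+1)" using DD_step_move[OF d] d by simp
  have p1: "PP (c+1) j = int (c + 1 + 3 * 2^j)" unfolding PP_def dd by simp
  have nn: "\<not> (int (c + 1 + 2^(j+1)) > int N)" using n by linarith
  show ?thesis unfolding a unfolding backmove_def peb_def p d p1 dd Let_def
    using nn by (simp add: algebra_simps)
qed


definition Inv :: "nat \<Rightarrow> nat \<Rightarrow> pstate \<Rightarrow> bool" where
  "Inv K c s = (fst s = c \<and> set (fst (snd s)) = peb c ` {1..K} \<and> length (fst (snd s)) = K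
     \<and> fst (snd s) \<noteq> [] \<and> (\<forall>p\<in>set (fst (snd s)). pos_key (hd (fst (snd s))) \<le> pos_key p)
     \<and> snd (snd s) = (\<lambda>j. if j \<in> {1..K} then mm c j else 0))"

lemma pos_key_peb[simp]: "pos_key (peb c j) = (False, PP c j)"
  unfolding pos_key_def peb_def by simp

lemma fst_peb[simp]: "fst (peb c j) = j" unfolding peb_def by simp

lemma card_peb: "card (peb c ` {1..K}) = K"
proof -
  have "inj_on (peb c) {1..K}" by (rule inj_onI) (metis fst_peb)
  then show ?thesis by (simp add: card_image)
qed

lemma fst_advance[simp]: "fst (advance p) = fst p"
  unfolding advance_def by (cases p) auto

lemma DD_ge: "2^j \<le> DD c j" unfolding DD_def by simp

lemma DD_inj: "DD c i = DD c j \<Longrightarrow> i = j"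
  unfolding DD_def by (rule val_unique)

lemma exists_j0:
  assumes "even d" "d \<le> 2^K" "d = c + 1 \<or> d = c + 2"
  shows "\<exists>j0 \<in> {1..K}. DD c j0 = d"
proof -
  have "d > 0" using assms(3) by auto
  then obtain i b where db: "d = 2^i * (2*b+1)" using val_exists by blast
  have i1: "i \<ge> 1" using assms(1) db by (cases i) auto
  have "2^i \<le> d" using db by simp
  then have "(2::nat)^i \<le> 2^K" using assms(2) by linarith
  then have iK: "i \<le> K" by (metis power_le_imp_le_exp one_less_numeral_iff semiring_norm(76))
  have p4: "(2::nat)^(i+1) \<ge> 4"
  proof -
    have "(2::nat)^2 \<le> 2^(i+1)" using i1 by (intro power_increasing) auto
    then show ?thesis by simp
  qed
  have e1: "(2::nat)^(i+1) = 2 * 2^i" by simp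
  have "mm c i = b" unfolding mm_def
  proof (rule div_nat_eqI)
    show "2 ^ (i + 1) * b \<le> c + 2 ^ i" using db assms(3) p4 e1 by (auto simp: algebra_simps)
    show "c + 2 ^ i < 2 ^ (i + 1) * Suc b" using db assms(3) p4 e1 by (auto simp: algebra_simps)
  qed
  then have "DD c i = d" unfolding DD_def db by simp
  with i1 iK show ?thesis by auto
qed

lemma hd_min:
  assumes "Inv K c (c, ps, mv)" "j0 \<in> {1..K}" "DD c j0 = d" "d = c + 1 \<or> d = c + 2" "even d"
  shows "hd ps = peb c j0"
proof -
  from assms(1) have S: "set ps = peb c ` {1..K}" and ne: "ps \<noteq> []"
    and mn: "\<forall>p\<in>set ps. pos_key (hd ps) \<le> pos_key p" unfolding Inv_def by auto
  have "hd ps \<in> set ps" using ne by simp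
  then obtain i where i: "i \<in> {1..K}" "hd ps = peb c i" using S by auto
  have "peb c j0 \<in> set ps" using S assms(2) by auto
  then have "pos_key (peb c i) \<le> pos_key (peb c j0)" using mn i by metis
  then have "PP c i \<le> PP c j0" by simp
  also have "PP c j0 = int d" using PP_eqD[of j0 c] assms(2-4) by auto
  finally have "int (DD c i) \<le> int d" using PP_ge[of c i] by linarith
  moreover have "DD c i > c" by (rule DD_gt)
  moreover have "even (DD c i)" using i by (intro DD_even) auto
  ultimately have "DD c i = d" using assms(4,5) by presburger
  then have "i = j0" using assms(3) DD_inj by metis
  then show ?thesis using i by simp
qed

lemma hd_sorted_min: "sorted (map f ys) \<Longrightarrow> ys \<noteq> [] \<Longrightarrow> \<forall>y\<in>set ys. f (hd ys) \<le> f y"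
  by (cases ys) auto

lemma Inv_init: "K \<ge> 1 \<Longrightarrow> Inv K 0 (pinit K)"
proof -
  assume K: "K \<ge> 1"
  have m0: "mm 0 j = 0" for j unfolding mm_def by simp
  have d0: "DD 0 j = 2^j" for j unfolding DD_def m0 by simp
  have p0: "PP 0 j = 2^j" for j unfolding PP_def d0 by simp
  have pe: "peb 0 j = (j, Some (2^j), Some (2^j))" for j unfolding peb_def p0 d0 by simp
  let ?ps = "[(j, Some (2 ^ j), Some (2 ^ j)). j \<leftarrow> [1..<K + 1]] :: pebble list"
  have S: "set ?ps = peb 0 ` {1..K}" unfolding pe by auto
  have hd: "hd ?ps = (1, Some 2, Some 2)" using K by (simp add: upt_rec)
  have mn: "\<forall>p\<in>set ?ps. pos_key (hd ?ps) \<le> pos_key p"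
  proof
    fix p assume "p \<in> set ?ps"
    then obtain j where "j \<ge> 1" "p = (j, Some (2^j), Some (2^j))" by auto
    moreover then have "(2::int) \<le> 2^j" by (metis power_one_right power_increasing one_le_numeral)
    ultimately show "pos_key (hd ?ps) \<le> pos_key p" unfolding hd pos_key_def by simp
  qed
  show ?thesis unfolding Inv_def pinit_def using S mn K by (auto simp: m0)
qed


lemma Inv_step:
  assumes K: "K = k + 1" and k: "k \<ge> 1" and c: "c + 1 < 2^k" and I: "Inv K c s"
  shows "Inv K (c+1) (pstep (2^K) s)"
proof -
  obtain ps mv where s: "s = (c, ps, mv)" using I unfolding Inv_def by (cases s) auto
  from I have S: "set ps = peb c ` {1..K}" and L: "length ps = K" and ne: "ps \<noteq> []"
    and MV: "mv = (\<lambda>j. if j \<in> {1..K} then mm c j else 0)" unfolding Inv_def s by auto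
  have I': "Inv K c (c, ps, mv)" using I s by simp
  have dist: "distinct ps" using S L card_peb by (intro card_distinct) simp
  have kK: "(2::nat)^k \<le> 2^K" using K by simp
  have cN: "c \<noteq> 2^K" using c kK by linarith
  show ?thesis
  proof (cases "even (c+1)")
    case True
    obtain j0 where j0: "j0 \<in> {1..K}" "DD c j0 = c + 1"
      using exists_j0[of "c+1" K c] True c kK by auto
    have h: "hd ps = peb c j0" using hd_min[OF I' j0] True by auto
    then obtain rest where ps: "ps = peb c j0 # rest" using ne by (cases ps) auto
    have Srest: "set rest = peb c ` ({1..K} - {j0})"
    proof -
      have "peb c j0 \<notin> set rest" using dist ps by simp
      then have "set rest = set ps - {peb c j0}" using ps by auto
      also have "\<dots> = peb c ` ({1..K} - {j0})" unfolding S by (auto, metis fst_peb)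
      finally show ?thesis .
    qed
    have "2^j0 < (2::nat)^k" using DD_ge[of j0 c] j0 c by linarith
    then have "j0 < k" by (metis power_less_imp_less_exp one_less_numeral_iff semiring_norm(76))
    then have "(2::nat)^(j0+1) \<le> 2^k" by (intro power_increasing) auto
    then have bnd: "c + 1 + 2^(j0+1) \<le> 2^K" using c K by simp
    have bm: "backmove (2^K) (advance (peb c j0)) = peb (c+1) j0"
      using backmove_move[OF _ j0(2) bnd] j0 by auto
    have ar: "advance ` set rest = peb (c+1) ` ({1..K} - {j0})"
    proof -
      have "advance (peb c i) = peb (c+1) i" if "i \<in> {1..K} - {j0}" for i
      proof -
        have "DD c i \<noteq> c + 1" using that j0(2) DD_inj[of c i j0] by auto
        then show ?thesis using advance_same that by auto
      qed
      then show ?thesis unfolding Srest image_image by (auto simp: image_iff)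
    qed
    have step: "pstep (2^K) s = (c+1, sort_key pos_key (peb (c+1) j0 # map advance rest),
                                 mv(j0 := mv j0 + 1))"
      unfolding s ps pstep_def using cN True bm by (simp add: Let_def)
    let ?l = "sort_key pos_key (peb (c+1) j0 # map advance rest)"
    have S2: "set ?l = peb (c+1) ` {1..K}"
    proof -
      have "set ?l = insert (peb (c+1) j0) (advance ` set rest)"
        by (simp only: set_sort list.set set_map)
      also have "\<dots> = peb (c+1) ` {1..K}" unfolding ar using j0(1) by auto
      finally show ?thesis .
    qed
    have L2: "length ?l = K" using L ps by simp
    have ne2: "?l \<noteq> []" by (metis list.distinct(1) set_empty set_sort insert_not_empty list.set(2))
    have mn2: "\<forall>p\<in>set ?l. pos_key (hd ?l) \<le> pos_key p"
      by (rule hd_sorted_min[OF sorted_sort_key ne2])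
    have MV2: "mv(j0 := mv j0 + 1) = (\<lambda>j. if j \<in> {1..K} then mm (c+1) j else 0)"
    proof
      fix j
      show "(mv(j0 := mv j0 + 1)) j = (if j \<in> {1..K} then mm (c+1) j else 0)"
      proof (cases "j = j0")
        case True then show ?thesis using j0 MV mm_step[of c j0] by auto
      next
        case False
        then have "DD c j \<noteq> c + 1" using j0(2) DD_inj[of c j j0] by auto
        then show ?thesis using False MV mm_step[of c j] by auto
      qed
    qed
    show ?thesis unfolding Inv_def step using S2 L2 ne2 mn2 MV2 by simp
  next
    case False
    obtain j0 where j0: "j0 \<in> {1..K}" "DD c j0 = c + 2"
      using exists_j0[of "c+2" K c] False c kK by auto
    have h: "hd ps = peb c j0" using hd_min[OF I' j0] False by auto
    have nomove: "DD c i \<noteq> c + 1" if "i \<in> {1..K}" for i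
      using DD_even[of i c] that False by auto
    have adv: "advance (peb c i) = peb (c+1) i" if "i \<in> {1..K}" for i
      using advance_same nomove that by auto
    have step: "pstep (2^K) s = (c+1, map advance ps, mv)"
      unfolding s pstep_def using cN False by (simp add: Let_def)
    have S2: "set (map advance ps) = peb (c+1) ` {1..K}"
      using adv unfolding set_map S image_image by (auto simp: image_iff)
    have hd2: "hd (map advance ps) = peb (c+1) j0" using ne h adv j0 by (simp add: hd_map)
    have D2: "DD (c+1) j0 = c + 2" using DD_step_same[of c j0] nomove j0 by auto
    have P2: "PP (c+1) j0 = int (c + 2)" using PP_eqD[of j0 "c+1"] D2 j0 by auto
    have mn2: "\<forall>p\<in>set (map advance ps). pos_key (hd (map advance ps)) \<le> pos_key p"
    proof
      fix p assume "p \<in> set (map advance ps)"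
      then obtain i where i: "i \<in> {1..K}" "p = peb (c+1) i" using S2 by auto
      have "DD (c+1) i > c + 1" using DD_gt by simp
      moreover have "even (DD (c+1) i)" using i by (intro DD_even) auto
      ultimately have "DD (c+1) i \<ge> c + 2" using False by presburger
      then have "PP (c+1) i \<ge> int (c+2)" using PP_ge[of "c+1" i] by linarith
      then show "pos_key (hd (map advance ps)) \<le> pos_key p" using P2 unfolding hd2 i(2) by simp
    qed
    have MV2: "mv = (\<lambda>j. if j \<in> {1..K} then mm (c+1) j else 0)"
      using MV mm_step nomove by auto
    show ?thesis unfolding Inv_def step using S2 L ne mn2 MV2 by simp
  qed
qed


lemma Inv_iter:
  assumes "k \<ge> 1" "c < 2^k"
  shows "Inv (k+1) c ((pstep (2^(k+1)) ^^ c) (pinit (k+1)))"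
  using assms(2)
proof (induction c)
  case 0 then show ?case using Inv_init by simp
next
  case (Suc c)
  then have "Inv (k+1) c ((pstep (2^(k+1)) ^^ c) (pinit (k+1)))" by simp
  then show ?case using Inv_step[of "k+1" k c] assms(1) Suc.prems by simp
qed

theorem fact7:
  fixes k j :: nat
  assumes "k \<ge> 1" and "1 \<le> j" and "j < k"
  shows "backward_moves (k + 1) (2 ^ k) j = 2 ^ (k - j - 1)"
proof -
  let ?K = "k + 1" and ?c = "2^k - 1 :: nat"
  have cpos: "(2::nat)^k \<ge> 2" using assms(1) by (metis power_one_right power_increasing one_le_numeral)
  have ck: "?c + 1 = 2^k" using cpos by simp
  define s where "s = (pstep (2^?K) ^^ ?c) (pinit ?K)"
  have I: "Inv ?K ?c s" unfolding s_def using Inv_iter[OF assms(1)] cpos by simp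
  obtain ps mv where s: "s = (?c, ps, mv)" using I unfolding Inv_def by (cases s) auto
  have I': "Inv ?K ?c (?c, ps, mv)" using I s by simp
  from I have ne: "ps \<noteq> []"
    and MV: "mv = (\<lambda>j. if j \<in> {1..?K} then mm ?c j else 0)" unfolding Inv_def s by auto
  have ev: "even (?c + 1)" unfolding ck using assms(1) by simp
  obtain j0 where j0: "j0 \<in> {1..?K}" "DD ?c j0 = ?c + 1"
    using exists_j0[of "?c+1" ?K ?c] ev ck by auto
  have "j0 = k"
  proof -
    have "(2::nat)^j0 * (2 * mm ?c j0 + 1) = 2^k * (2*0+1)" using j0(2) ck unfolding DD_def by simp
    then show ?thesis by (rule val_unique)
  qed
  have h: "hd ps = peb ?c j0" using hd_min[OF I' j0] ev by auto
  then obtain rest where ps: "ps = peb ?c j0 # rest" using ne by (cases ps) auto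
  have cN: "?c \<noteq> 2^?K" using cpos by (simp add: algebra_simps)
  have "2^k = Suc ?c" using ck by simp
  then have "(pstep (2^?K) ^^ (2^k)) (pinit ?K) = pstep (2^?K) s"
    unfolding s_def by (metis funpow.simps(2) comp_apply)
  then have "backward_moves ?K (2^k) j = snd (snd (pstep (2^?K) s)) j"
    unfolding backward_moves_def by simp
  also have "\<dots> = (mv(j0 := mv j0 + 1)) j"
    unfolding s ps pstep_def using cN ev by (simp add: Let_def)
  also have "\<dots> = mm ?c j" using \<open>j0 = k\<close> assms MV by auto
  also have "\<dots> = 2^(k-j-1)" unfolding mm_def
  proof (rule div_nat_eqI)
    have e: "(2::nat)^(j+1) * 2^(k-j-1) = 2^k" using assms(3)
      by (metis power_add Suc_eq_plus1 Suc_leI le_add_diff_inverse diff_diff_left)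
    have "(2::nat)^j \<ge> 1" by simp
    then show "(2::nat) ^ (j + 1) * 2 ^ (k - j - 1) \<le> 2 ^ k - 1 + 2 ^ j" using e cpos by linarith
    have "(2::nat)^(j+1) * Suc (2^(k-j-1)) = 2^k + 2^(j+1)" using e by simp
    moreover have "(2::nat)^(j+1) = 2 * 2^j" by simp
    ultimately show "(2::nat) ^ k - 1 + 2 ^ j < 2 ^ (j + 1) * Suc (2 ^ (k - j - 1))" using cpos by linarith
  qed
  finally show ?thesis .
qed

end
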